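(* Let $S\subset\mathbb T^d$ be closed and $S^c=\overline{\mathbb T^d\setminus S}$. Suppose there exist $p_1,\dots,p_M\in\mathbb T^d$ and $r\in(0,r_{\max})$ such that (a) $B_{2r}(p_i)\cap B_{2r}(p_j)=\emptyset$ for all $i\ne j$, and (b) $S^c\subset\bigcup_iB_r(p_i)$. Then for $1\le k\le d-1$ the map $i_*:H_k(S)\to H_k(\mathbb T^d)$ induced by inclusion is surjective.
   Context: $\mathbb T^d=\mathbb R^d/\mathbb Z^d$ is the flat torus with the toroidal metric, $d\ge2$; $B_r(p)$ denotes the closed metric ball. $r_{\max}>0$ is a fixed small constant such that every ball of radius $\le 2r_{\max}$ in $\mathbb T^d$ is isometric to a Euclidean ball (in particular balls and annuli of radii below it are contractible, respectively homotopy equivalent to $\mathbb S^{d-1}$). Homology is singular homology with field coefficients. *)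

theory Defs
  imports "HOL-Analysis.Analysis" "HOL-Homology.Homology"
begin

text \<open>Flat torus R^d / Z^d, modelled on the fundamental domain [0,1)^d inside real^'n,
  with the toroidal (quotient) metric.\<close>

definition torus_carrier :: "(real^'n) set" where
  "torus_carrier = {x. \<forall>i. 0 \<le> x$i \<and> x$i < 1}"

definition torus_dist :: "real^'n \<Rightarrow> real^'n \<Rightarrow> real" where
  "torus_dist x y = Inf ((\<lambda>z. norm (x - y - z)) ` {z. \<forall>i. z$i \<in> \<int>})"

definition torus_top :: "(real^'n) topology" where
  "torus_top = Metric_space.mtopology torus_carrier torus_dist"

definition torus_cball :: "real^'n \<Rightarrow> real \<Rightarrow> (real^'n) set" where
  "torus_cball p r = Metric_space.mcball torus_carrier torus_dist p r"

end

theory Submission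
  imports Defs
begin


definition Zv :: "(real^'n) set" where "Zv = {z. \<forall>i. z$i \<in> \<int>}"

lemma Zv_diff: "a \<in> Zv \<Longrightarrow> b \<in> Zv \<Longrightarrow> a - b \<in> Zv"
  by (auto simp: Zv_def)
lemma Zv_add: "a \<in> Zv \<Longrightarrow> b \<in> Zv \<Longrightarrow> a + b \<in> Zv"
  by (auto simp: Zv_def)
lemma Zv_uminus: "a \<in> Zv \<Longrightarrow> - a \<in> Zv"
  by (auto simp: Zv_def)
lemma Zv_0: "0 \<in> Zv"
  by (auto simp: Zv_def)
lemma Zv_ne: "Zv \<noteq> {}"
  using Zv_0 by auto

lemma td_def': "torus_dist x y = Inf ((\<lambda>z. norm (x - y - z)) ` Zv)"
  by (simp add: torus_dist_def Zv_def)

lemma td_le: "z \<in> Zv \<Longrightarrow> torus_dist x y \<le> norm (x - y - z)"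
  unfolding td_def' by (rule cInf_lower) (auto intro: bdd_belowI[where m=0])

lemma td_nonneg: "0 \<le> torus_dist x y"
  unfolding td_def' by (rule cInf_greatest) (auto simp: Zv_ne)

lemma Zv_norm_ge1:
  assumes "z \<in> Zv" "z \<noteq> 0" shows "1 \<le> norm z"
proof -
  obtain i where i: "z$i \<noteq> 0" using assms(2) by (metis vec_eq_iff zero_index)
  from assms(1) obtain m where m: "z$i = of_int m" by (auto simp: Zv_def elim!: Ints_cases)
  with i have "m \<noteq> 0" by auto
  hence "1 \<le> \<bar>z$i\<bar>" using m by linarith
  also have "\<dots> \<le> norm z" by (rule component_le_norm_cart)
  finally show ?thesis .
qed

lemma td_eq:
  assumes "z0 \<in> Zv" "norm (x - y - z0) < 1/2"
  shows "torus_dist x y = norm (x - y - z0)"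
proof (rule antisym)
  show "torus_dist x y \<le> norm (x - y - z0)" using assms(1) by (rule td_le)
  show "norm (x - y - z0) \<le> torus_dist x y"
    unfolding td_def'
  proof (rule cInf_greatest)
    show "(\<lambda>z. norm (x - y - z)) ` Zv \<noteq> {}" using assms(1) by auto
  next
    fix t assume "t \<in> (\<lambda>z. norm (x - y - z)) ` Zv"
    then obtain z where z: "z \<in> Zv" "t = norm (x - y - z)" by auto
    show "norm (x - y - z0) \<le> t"
    proof (cases "z = z0")
      case True then show ?thesis using z by simp
    next
      case False
      have "1 \<le> norm (z - z0)" using Zv_norm_ge1[OF Zv_diff[OF z(1) assms(1)]] False by simp
      moreover have "norm (z - z0) \<le> norm (x - y - z) + norm (x - y - z0)"
        using norm_triangle_ineq4[of "x - y - z0" "x - y - z"] by (simp add: algebra_simps)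
      ultimately show ?thesis using z assms(2) by linarith
    qed
  qed
qed

lemma td_small:
  fixes x y :: "real^'n"
  assumes "torus_dist x y < e" "e \<le> 1/2"
  obtains z where "z \<in> Zv" "torus_dist x y = norm (x - y - z)"
proof -
  have "\<exists>t\<in>(\<lambda>z. norm (x - y - z)) ` Zv. t < e"
    using assms(1) unfolding td_def' by (intro cInf_lessD) (auto simp: Zv_ne)
  then obtain z where "z \<in> Zv" "norm (x - y - z) < e" by auto
  with td_eq[of z x y] assms show ?thesis using that by auto
qed

lemma td_commute: fixes x y :: "real^'n" shows "torus_dist x y = torus_dist y x"
proof -
  have "(\<lambda>z. norm (x - y - z)) ` (Zv::(real^'n) set) = (\<lambda>z. norm (y - x - z)) ` Zv"
  proof (intro equalityI image_subsetI)
    fix z :: "real^'n" assume "z \<in> Zv"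
    then have "norm (x - y - z) = norm (y - x - (-z))" "-z \<in> Zv"
      by (auto simp: Zv_uminus norm_minus_commute algebra_simps)
    thus "norm (x - y - z) \<in> (\<lambda>z. norm (y - x - z)) ` Zv" by blast
  next
    fix z :: "real^'n" assume "z \<in> Zv"
    then have "norm (y - x - z) = norm (x - y - (-z))" "-z \<in> Zv"
      by (auto simp: Zv_uminus norm_minus_commute algebra_simps)
    thus "norm (y - x - z) \<in> (\<lambda>z. norm (x - y - z)) ` Zv" by blast
  qed
  thus ?thesis by (simp add: td_def')
qed

lemma td_triangle: fixes x y z :: "real^'n" shows "torus_dist x z \<le> torus_dist x y + torus_dist y z"
proof -
  have 1: "torus_dist x z - norm (y - z - z2) \<le> norm (x - y - z1)" if "z1 \<in> Zv" "z2 \<in> Zv" for z1 z2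
  proof -
    have "torus_dist x z \<le> norm (x - z - (z1 + z2))" by (rule td_le) (use that in \<open>simp add: Zv_add\<close>)
    also have "\<dots> \<le> norm (x - y - z1) + norm (y - z - z2)"
      using norm_triangle_ineq[of "x - y - z1" "y - z - z2"] by (simp add: algebra_simps)
    finally show ?thesis by simp
  qed
  have 2: "torus_dist x z - norm (y - z - z2) \<le> torus_dist x y" if "z2 \<in> Zv" for z2
    unfolding td_def'[of x y] by (rule cInf_greatest) (use 1 that Zv_ne in auto)
  have "torus_dist x z - torus_dist x y \<le> torus_dist y z"
    unfolding td_def'[of y z] by (rule cInf_greatest) (use 2 Zv_ne in force)+
  thus ?thesis by simp
qed

lemma td_zero:
  fixes x y :: "real^'n"
  assumes "x \<in> torus_carrier" "y \<in> torus_carrier"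
  shows "torus_dist x y = 0 \<longleftrightarrow> x = y"
proof
  assume "x = y" thus "torus_dist x y = 0"
    using td_le[OF Zv_0, of x x] td_nonneg[of x x] by simp
next
  assume 0: "torus_dist x y = 0"
  then obtain z where z: "z \<in> Zv" "torus_dist x y = norm (x - y - z)"
    using td_small[of x y "1/2"] by auto
  hence xyz: "x - y = z" using 0 by simp
  show "x = y"
  proof (rule ccontr)
    assume "x \<noteq> y"
    hence "z \<noteq> 0" using xyz by auto
    then obtain i where i: "z$i \<noteq> 0" by (metis vec_eq_iff zero_index)
    from z(1) obtain m where m: "z$i = of_int m" by (auto simp: Zv_def elim!: Ints_cases)
    have "x$i - y$i = of_int m" using xyz m by (metis vector_minus_component)
    moreover have "0 \<le> x$i" "x$i < 1" "0 \<le> y$i" "y$i < 1"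
      using assms by (auto simp: torus_carrier_def)
    ultimately have "m = 0" by (smt (verit) of_int_1 of_int_less_iff of_int_minus less_int_code(1) of_int_0_less_iff)
    with i m show False by simp
  qed
qed

lemma torus_metric: "Metric_space torus_carrier torus_dist"
  by unfold_locales (auto simp: td_nonneg td_commute td_zero td_triangle)



definition fr :: "real^'n \<Rightarrow> real^'n" where "fr v = (\<chi> i. frac (v$i))"

lemma fr_in: "fr v \<in> torus_carrier"
  by (simp add: fr_def torus_carrier_def frac_lt_1)

lemma fr_id: "y \<in> torus_carrier \<Longrightarrow> fr y = y"
  by (simp add: fr_def torus_carrier_def frac_eq vec_eq_iff)

lemma fr_diff: "fr v - v \<in> Zv"
  by (simp add: fr_def Zv_def frac_def)

lemma torus_top_topspace: "topspace torus_top = torus_carrier"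
  by (simp add: torus_top_def Metric_space.topspace_mtopology[OF torus_metric])

lemma td_fr_le: "torus_dist (fr a) (fr b) \<le> norm (a - b)"
proof -
  have "(fr a - a) - (fr b - b) \<in> Zv" by (intro Zv_diff fr_diff)
  from td_le[OF this, of "fr a" "fr b"] show ?thesis by (simp add: algebra_simps)
qed

lemma td_fr_eq: "norm (a - b) < 1/2 \<Longrightarrow> torus_dist (fr a) (fr b) = norm (a - b)"
proof -
  assume "norm (a - b) < 1/2"
  have "(fr a - a) - (fr b - b) \<in> Zv" by (intro Zv_diff fr_diff)
  from td_eq[OF this, of "fr a" "fr b"] show ?thesis using \<open>norm (a - b) < 1/2\<close>
    by (simp add: algebra_simps)
qed

lemma fr_Zv: assumes "q \<in> torus_carrier" "z \<in> Zv" shows "fr (q - z) = q"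
proof -
  have "(fr (q - z) - (q - z)) - z \<in> Zv" by (intro Zv_diff fr_diff assms)
  then have "torus_dist (fr (q - z)) q \<le> 0"
    using td_le[of "(fr (q - z) - (q - z)) - z" "fr (q - z)" q] by (simp add: algebra_simps)
  then have "torus_dist (fr (q - z)) q = 0" using td_nonneg[of "fr (q - z)" q] by linarith
  thus ?thesis using td_zero[OF fr_in assms(1)] by simp
qed

lemma continuous_fr: "continuous_map euclidean torus_top fr"
  unfolding torus_top_def Metric_space.continuous_map_to_metric[OF torus_metric]
proof (intro ballI allI impI)
  fix x :: "real^'n" and e :: real assume "e > 0"
  show "\<exists>U. openin euclidean U \<and> x \<in> U \<and> (\<forall>y\<in>U. fr y \<in> Metric_space.mball torus_carrier torus_dist (fr x) e)"
  proof (intro exI conjI ballI)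
    show "openin euclidean (ball x e)" by simp
    show "x \<in> ball x e" using \<open>e > 0\<close> by simp
    fix y assume "y \<in> ball x e"
    then have "torus_dist (fr x) (fr y) < e" using td_fr_le[of x y] by (simp add: dist_norm)
    thus "fr y \<in> Metric_space.mball torus_carrier torus_dist (fr x) e"
      by (simp add: Metric_space.in_mball[OF torus_metric] fr_in)
  qed
qed

definition phi :: "real^'n \<Rightarrow> real^'n \<Rightarrow> real^'n" where "phi p v = fr (p + v)"

lemma phi_iso: "norm (v - w) < 1/2 \<Longrightarrow> torus_dist (phi p v) (phi p w) = norm (v - w)"
  unfolding phi_def by (subst td_fr_eq) (auto simp: algebra_simps)

lemma phi_0: "p \<in> torus_carrier \<Longrightarrow> phi p 0 = p"
  by (simp add: phi_def fr_id)

lemma phi_dist: "p \<in> torus_carrier \<Longrightarrow> norm v < 1/2 \<Longrightarrow> torus_dist p (phi p v) = norm v"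
  using phi_iso[of 0 v p] by (simp add: phi_0)

lemma phi_in: "phi p v \<in> torus_carrier" by (simp add: phi_def fr_in)

lemma phi_image_cball:
  fixes p :: "real^'n"
  assumes p: "p \<in> torus_carrier" and R: "R < 1/4"
  shows "phi p ` cball 0 R = torus_cball p R"
proof
  show "phi p ` cball 0 R \<subseteq> torus_cball p R"
    using p R by (auto simp: torus_cball_def Metric_space.mcball_def[OF torus_metric] phi_in phi_dist)
  show "torus_cball p R \<subseteq> phi p ` cball 0 R"
  proof
    fix q assume "q \<in> torus_cball p R"
    then have q: "q \<in> torus_carrier" "torus_dist q p \<le> R"
      by (auto simp: torus_cball_def Metric_space.mcball_def[OF torus_metric] td_commute)
    then obtain z where z: "z \<in> Zv" "torus_dist q p = norm (q - p - z)"
      using td_small[of q p "1/2"] R by auto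
    have "phi p (q - p - z) = q" unfolding phi_def using fr_Zv[OF q(1) z(1)] by (simp add: algebra_simps)
    moreover have "q - p - z \<in> cball 0 R" using q z by simp
    ultimately show "q \<in> phi p ` cball 0 R" by (metis image_eqI)
  qed
qed

lemma phi_image_annulus:
  fixes p :: "real^'n"
  assumes p: "p \<in> torus_carrier" and R: "R < 1/4"
  shows "phi p ` (cball 0 R - ball 0 \<rho>) = torus_cball p R - Metric_space.mball torus_carrier torus_dist p \<rho>"
proof -
  have "phi p ` (cball 0 R - ball 0 \<rho>) = {x \<in> phi p ` cball 0 R. \<not> torus_dist p x < \<rho>}"
    using p R by (auto simp: phi_dist)
  then show ?thesis using phi_image_cball[OF p R] p
    by (auto simp: torus_cball_def Metric_space.mcball_def[OF torus_metric] Metric_space.in_mball[OF torus_metric])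
qed

lemma phi_homeo:
  fixes p :: "real^'n"
  assumes p: "p \<in> torus_carrier" and R: "R < 1/4"
  shows "homeomorphic_map (top_of_set (cball 0 R)) (subtopology torus_top (torus_cball p R)) (phi p)"
proof -
  define g where "g = inv_into (cball 0 R) (phi p)"
  have inj: "inj_on (phi p) (cball 0 R)"
  proof (rule inj_onI)
    fix v w assume "v \<in> cball 0 R" "w \<in> cball 0 R" "phi p v = phi p w"
    moreover have "norm (v - w) < 1/2" using calculation R norm_triangle_ineq4[of v w] by simp
    ultimately show "v = w" using phi_iso[of v w p] td_zero[OF phi_in phi_in, of p v p v] by simp
  qed
  have im: "phi p ` cball 0 R = torus_cball p R" by (rule phi_image_cball[OF p R])
  have gK: "g y \<in> cball 0 R" if "y \<in> torus_cball p R" for y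
    using that im by (metis g_def inv_into_into)
  have fg: "phi p (g y) = y" if "y \<in> torus_cball p R" for y
    using that im by (metis g_def f_inv_into_f)
  have gf: "g (phi p v) = v" if "v \<in> cball 0 R" for v
    using that inj by (simp add: g_def)
  have sub: "torus_cball p R \<subseteq> topspace torus_top"
    by (auto simp: torus_cball_def Metric_space.mcball_def[OF torus_metric] torus_top_topspace)
  have "homeomorphic_maps (top_of_set (cball 0 R)) (subtopology torus_top (torus_cball p R)) (phi p) g"
    unfolding homeomorphic_maps_def
  proof (intro conjI ballI)
    have "continuous_map euclidean torus_top (phi p)"
    proof -
      have "continuous_map euclidean euclidean (\<lambda>v::real^'n. p + v)" by (intro continuous_intros)
      then have "continuous_map euclidean torus_top (fr \<circ> (\<lambda>v. p + v))"
        using continuous_fr continuous_map_compose by blast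
      thus ?thesis by (simp add: phi_def[abs_def] o_def)
    qed
    then show "continuous_map (top_of_set (cball 0 R)) (subtopology torus_top (torus_cball p R)) (phi p)"
      using im by (auto simp: continuous_map_in_subtopology intro: continuous_map_from_subtopology)
    show "continuous_map (subtopology torus_top (torus_cball p R)) (top_of_set (cball 0 R)) g"
      unfolding continuous_map_in_subtopology
    proof
      show "continuous_map (subtopology torus_top (torus_cball p R)) euclidean g"
        unfolding mtopology_is_euclidean[symmetric] Met_TC.continuous_map_to_metric
      proof (intro ballI allI impI)
        fix x and e :: real assume x: "x \<in> topspace (subtopology torus_top (torus_cball p R))" and "e > 0"
        have xB: "x \<in> torus_cball p R" using x sub by auto
        define U where "U = torus_cball p R \<inter> Metric_space.mball torus_carrier torus_dist x e"
        show "\<exists>U. openin (subtopology torus_top (torus_cball p R)) U \<and> x \<in> U \<and> (\<forall>y\<in>U. g y \<in> Met_TC.mball (g x) e)"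
        proof (intro exI conjI ballI)
          show "openin (subtopology torus_top (torus_cball p R)) U"
            unfolding U_def torus_top_def by (rule openin_subtopology_Int2) (simp add: Metric_space.openin_mball[OF torus_metric])
          show "x \<in> U" using xB sub \<open>e > 0\<close> by (auto simp: U_def torus_top_topspace Metric_space.centre_in_mball_iff[OF torus_metric])
          fix y assume "y \<in> U"
          then have yB: "y \<in> torus_cball p R" and "torus_dist x y < e"
            by (auto simp: U_def Metric_space.in_mball[OF torus_metric])
          have "norm (g x - g y) < 1/2" using gK[OF xB] gK[OF yB] R norm_triangle_ineq4[of "g x" "g y"] by simp
          then have "torus_dist x y = norm (g x - g y)" using phi_iso[of "g x" "g y" p] fg xB yB by simp
          thus "g y \<in> Met_TC.mball (g x) e" using \<open>torus_dist x y < e\<close> by (simp add: dist_norm)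
        qed
      qed
      show "g \<in> topspace (subtopology torus_top (torus_cball p R)) \<rightarrow> cball 0 R"
        using gK sub by auto
    qed
    fix x assume "x \<in> topspace (top_of_set (cball (0::real^'n) R))"
    then show "g (phi p x) = x" using gf by simp
  next
    fix y assume "y \<in> topspace (subtopology torus_top (torus_cball p R))"
    then show "phi p (g y) = y" using fg by auto
  qed
  then show ?thesis using homeomorphic_map_maps by blast
qed



lemma annulus_eqv_sphere:
  fixes \<rho> R :: real
  assumes "0 < \<rho>" "\<rho> \<le> R"
  shows "(cball (0::real^'n) R - ball 0 \<rho>) homotopy_eqv sphere (0::real^'n) \<rho>"
proof (rule deformation_retract_imp_homotopy_eqv)
  define r where "r = (\<lambda>x::real^'n. (\<rho> / norm x) *\<^sub>R x)"
  let ?A = "cball (0::real^'n) R - ball 0 \<rho>"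
  have nz: "x \<noteq> 0" if "x \<in> ?A" for x using that assms by auto
  have contr: "continuous_on ?A r"
    unfolding r_def by (intro continuous_intros) (use nz in auto)
  have rS: "r x \<in> sphere 0 \<rho>" if "x \<in> ?A" for x
    using nz[OF that] assms by (simp add: r_def)
  show "retraction ?A (sphere 0 \<rho>) r"
    unfolding retraction_def using contr rS assms by (auto simp: r_def)
  have "homotopic_with_canon (\<lambda>z. True) ?A ?A id r"
  proof (rule homotopic_with_linear)
    show "continuous_on ?A id" by (simp add: continuous_on_id)
    show "continuous_on ?A r" by (rule contr)
    fix x assume x: "x \<in> ?A"
    show "closed_segment (id x) (r x) \<subseteq> ?A"
    proof
      fix y assume "y \<in> closed_segment (id x) (r x)"
      then obtain u where u: "0 \<le> u" "u \<le> 1" "y = (1 - u) *\<^sub>R x + u *\<^sub>R r x"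
        by (auto simp: closed_segment_def)
      have nx: "norm x > 0" using nz[OF x] by simp
      have "y = ((1 - u) + u * \<rho> / norm x) *\<^sub>R x" using u(3) by (simp add: r_def algebra_simps)
      moreover have "(1 - u) + u * \<rho> / norm x \<ge> 0" using u nx assms by simp
      ultimately have "norm y = ((1 - u) + u * \<rho> / norm x) * norm x" by simp
      also have "\<dots> = (1 - u) * norm x + u * \<rho>" using nx by (simp add: field_simps)
      finally have ny: "norm y = (1 - u) * norm x + u * \<rho>" .
      have "\<rho> \<le> norm x" "norm x \<le> R" using x by auto
      then have "(1 - u) * \<rho> \<le> (1 - u) * norm x" "(1 - u) * norm x \<le> (1 - u) * R" "u * \<rho> \<le> u * R"
        using u assms by (auto intro: mult_left_mono)
      then show "y \<in> ?A" using ny by (auto simp: algebra_simps)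
    qed
  qed
  then show "homotopic_with_canon (\<lambda>x. True) ?A ?A id r" by simp
qed

lemma sphere_eqv_nsphere:
  shows "top_of_set (sphere (0::real^'n) 1) homotopy_equivalent_space nsphere (CARD('n) - 1)"
proof -
  obtain f :: "(nat \<Rightarrow> real) \<Rightarrow> real^'n" and g
    where "homeomorphic_maps (nsphere (CARD('n) - 1)) (top_of_set (sphere 0 1 \<inter> span Basis)) f g"
    using homeomorphic_maps_nsphere_euclidean_sphere[of "Basis :: (real^'n) set" "CARD('n)"]
    by (auto simp: independent_Basis orthogonal_Basis)
  then have "nsphere (CARD('n) - 1) homeomorphic_space top_of_set (sphere (0::real^'n) 1)"
    unfolding homeomorphic_space_def by (auto simp: span_Basis)
  then show ?thesis
    using homeomorphic_imp_homotopy_equivalent_space homotopy_equivalent_space_sym by blast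
qed

lemma eucl_rel_trivial:
  fixes \<rho> R :: real and k :: int
  assumes "0 < \<rho>" "\<rho> < R" "k \<le> int CARD('n) - 1"
  shows "trivial_group (relative_homology_group k (top_of_set (cball (0::real^'n) R)) (cball 0 R - ball 0 \<rho>))"
proof -
  let ?K = "cball (0::real^'n) R" and ?A = "cball (0::real^'n) R - ball 0 \<rho>"
  have con: "contractible_space (top_of_set ?K)"
    by (simp add: convex_imp_contractible)
  obtain x :: "real^'n" where "norm x = R" using vector_choose_size[of R] assms by auto
  then have ne: "topspace (top_of_set ?K) \<inter> ?A \<noteq> {}" using assms by auto
  have sub: "subtopology (top_of_set ?K) ?A = top_of_set ?A"
    by (simp add: subtopology_subtopology Int_absorb1 Diff_subset)
  have "top_of_set ?A homotopy_equivalent_space top_of_set (sphere (0::real^'n) \<rho>)"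
    using annulus_eqv_sphere[of \<rho> R] assms by simp
  also have "top_of_set (sphere (0::real^'n) \<rho>) homotopy_equivalent_space top_of_set (sphere (0::real^'n) 1)"
    using homeomorphic_imp_homotopy_eqv[OF homeomorphic_spheres[of \<rho> 1]] assms by simp
  also have "top_of_set (sphere (0::real^'n) 1) homotopy_equivalent_space nsphere (CARD('n) - 1)"
    by (rule sphere_eqv_nsphere)
  finally have heq: "top_of_set ?A homotopy_equivalent_space nsphere (CARD('n) - 1)" .
  have "trivial_group (reduced_homology_group (k - 1) (nsphere (CARD('n) - 1)))"
    using assms(3) by (subst trivial_reduced_homology_group_nsphere) (auto simp: of_nat_diff)
  then have "trivial_group (reduced_homology_group (k - 1) (top_of_set ?A))"
    using homotopy_equivalent_space_imp_isomorphic_reduced_homology_groups[OF heq, of "k - 1"]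
    by (meson group.iso_sym group_reduced_homology_group isomorphic_group_triviality1)
  then show ?thesis
    using isomorphic_group_relative_homology_of_contractible[OF con ne, of k] sub
    by (metis group.iso_sym group_relative_homology_group group_reduced_homology_group isomorphic_group_triviality1)
qed



abbreviation tmb :: "real^'n \<Rightarrow> real \<Rightarrow> (real^'n) set" where
  "tmb p \<rho> \<equiv> Metric_space.mball torus_carrier torus_dist p \<rho>"

lemma tmb_open: "openin torus_top (tmb p \<rho>)"
  unfolding torus_top_def by (simp add: Metric_space.openin_mball[OF torus_metric])

lemma tcb_closed: "closedin torus_top (torus_cball p \<rho>)"
  unfolding torus_top_def torus_cball_def by (simp add: Metric_space.closedin_mcball[OF torus_metric])

lemma tmb_sub_tcb: "\<rho> \<le> R \<Longrightarrow> tmb p \<rho> \<subseteq> torus_cball p R"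
  by (auto simp: torus_cball_def Metric_space.mcball_def[OF torus_metric] Metric_space.in_mball[OF torus_metric])

lemma tcb_sub_tmb: "\<rho> < R \<Longrightarrow> torus_cball p \<rho> \<subseteq> tmb p R"
  by (auto simp: torus_cball_def Metric_space.mcball_def[OF torus_metric] Metric_space.in_mball[OF torus_metric])

lemma tcb_carrier: "torus_cball p R \<subseteq> torus_carrier"
  by (auto simp: torus_cball_def Metric_space.mcball_def[OF torus_metric])

lemma torus_rel_trivial:
  fixes p :: "real^'n" and k :: int
  assumes p: "p \<in> torus_carrier" and "0 < \<rho>" "\<rho> < R" "R < 1/4" "k \<le> int CARD('n) - 1"
  shows "trivial_group (relative_homology_group k (subtopology torus_top (torus_cball p R)) (torus_cball p R - tmb p \<rho>))"
proof -
  have "hom_induced k (top_of_set (cball 0 R)) (cball 0 R - ball 0 \<rho>) (subtopology torus_top (torus_cball p R)) (phi p ` (cball 0 R - ball 0 \<rho>)) (phi p)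
     \<in> iso (relative_homology_group k (top_of_set (cball 0 R)) (cball 0 R - ball 0 \<rho>))
           (relative_homology_group k (subtopology torus_top (torus_cball p R)) (phi p ` (cball 0 R - ball 0 \<rho>)))"
    by (rule homeomorphic_map_relative_homology_iso[OF phi_homeo[OF p \<open>R < 1/4\<close>]]) auto
  then have "relative_homology_group k (top_of_set (cball (0::real^'n) R)) (cball 0 R - ball 0 \<rho>)
      \<cong> relative_homology_group k (subtopology torus_top (torus_cball p R)) (torus_cball p R - tmb p \<rho>)"
    using phi_image_annulus[OF p \<open>R < 1/4\<close>] by (metis is_isoI)
  moreover have "trivial_group (relative_homology_group k (top_of_set (cball (0::real^'n) R)) (cball 0 R - ball 0 \<rho>))"
    by (rule eucl_rel_trivial) (use assms in auto)
  ultimately show ?thesis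
    using isomorphic_group_triviality1 group_relative_homology_group by blast
qed

lemma surj_of_trivial:
  assumes "trivial_group (relative_homology_group p X S)"
  shows "hom_induced p (subtopology X S) {} X {} id ` carrier (homology_group p (subtopology X S))
       = carrier (homology_group p X)"
proof -
  have "kernel (homology_group p X) (relative_homology_group p X S) (hom_induced p X {} X S id)
        = hom_induced p (subtopology X S) {} X {} id ` carrier (homology_group p (subtopology X S))"
    using homology_exactness_axiom_3[of p X S] by simp
  moreover have "kernel (homology_group p X) (relative_homology_group p X S) (hom_induced p X {} X S id)
        = carrier (homology_group p X)"
    using assms hom_induced_hom[of p X "{}" X S id]
    by (auto simp: kernel_def trivial_group_def hom_def Pi_def)
  ultimately show ?thesis by simp
qed

lemma cont_incl: "A' \<subseteq> A \<Longrightarrow> continuous_map (subtopology X A') (subtopology X A) id"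
  by (auto simp: continuous_map_in_subtopology intro: continuous_map_from_subtopology)

lemma step_surj:
  fixes p :: "real^'n" and k :: int
  assumes p: "p \<in> torus_carrier" and "0 < \<rho>" "\<rho> < R" "R < 1/4" "k \<le> int CARD('n) - 1"
    and Aj: "Aj \<subseteq> torus_carrier" and cb: "torus_cball p R \<subseteq> Aj"
  shows "hom_induced k (subtopology torus_top (Aj - tmb p \<rho>)) {} (subtopology torus_top Aj) {} id
           ` carrier (homology_group k (subtopology torus_top (Aj - tmb p \<rho>)))
       = carrier (homology_group k (subtopology torus_top Aj))"
proof -
  define X where "X = subtopology torus_top Aj"
  define A' where "A' = Aj - tmb p \<rho>"
  define U where "U = Aj - torus_cball p R"
  have tX: "topspace X = Aj" using Aj by (auto simp: X_def torus_top_topspace)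
  have subX: "subtopology X A' = subtopology torus_top A'"
    by (auto simp: X_def A'_def subtopology_subtopology Int_absorb1 intro!: arg_cong[where f="subtopology torus_top"])
  have "X closure_of U \<subseteq> Aj - tmb p R"
  proof (rule closure_of_minimal)
    show "U \<subseteq> Aj - tmb p R" using tmb_sub_tcb[of R R p] by (auto simp: U_def)
    have "openin X (Aj \<inter> tmb p R)" unfolding X_def by (rule openin_subtopology_Int2[OF tmb_open])
    then show "closedin X (Aj - tmb p R)"
      using closedin_diff[OF closedin_topspace, of X "Aj \<inter> tmb p R"] tX by (simp add: Diff_Int)
  qed
  also have "\<dots> \<subseteq> X interior_of A'"
  proof -
    have "closedin X (Aj \<inter> torus_cball p \<rho>)" unfolding X_def by (rule closedin_subtopology_Int_closed[OF tcb_closed])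
    then have "openin X (Aj - torus_cball p \<rho>)"
      using openin_diff[OF openin_topspace, of X "Aj \<inter> torus_cball p \<rho>"] tX by (simp add: Diff_Int)
    moreover have "Aj - torus_cball p \<rho> \<subseteq> A'" using tmb_sub_tcb[of \<rho> \<rho> p] by (auto simp: A'_def)
    ultimately have "Aj - torus_cball p \<rho> \<subseteq> X interior_of A'" by (rule interior_of_maximal[rotated])
    moreover have "Aj - tmb p R \<subseteq> Aj - torus_cball p \<rho>" using tcb_sub_tmb[of \<rho> R p] assms by auto
    ultimately show ?thesis by blast
  qed
  finally have cl: "X closure_of U \<subseteq> X interior_of A'" .
  have iso: "hom_induced k (subtopology X (Aj - U)) (A' - U) (subtopology X Aj) A' id
    \<in> iso (relative_homology_group k (subtopology X (Aj - U)) (A' - U))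
          (relative_homology_group k (subtopology X Aj) A')"
    by (rule homology_excision_axiom[OF cl]) (auto simp: A'_def)
  have e1: "Aj - U = torus_cball p R" using cb by (auto simp: U_def)
  have e2: "A' - U = torus_cball p R - tmb p \<rho>" using cb by (auto simp: U_def A'_def)
  have e3: "subtopology X (torus_cball p R) = subtopology torus_top (torus_cball p R)"
    using cb by (simp add: X_def subtopology_subtopology Int_absorb1)
  have e4: "subtopology X Aj = X" using tX by (metis subtopology_topspace)
  have "trivial_group (relative_homology_group k X A')"
    using iso torus_rel_trivial[OF assms(1-5)] unfolding e1 e2 e3 e4
    by (meson is_isoI isomorphic_group_triviality1 group_relative_homology_group)
  from surj_of_trivial[OF this] show ?thesis unfolding subX by (simp add: X_def A'_def)
qed



theorem mainTheorem16:
  fixes S :: "(real^'n) set" and p :: "nat \<Rightarrow> real^'n" and M :: nat and r :: real and k :: int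
  assumes dim: "CARD('n) \<ge> 2"
    and S_closed: "closedin torus_top S"
    and p_in: "\<And>i. i < M \<Longrightarrow> p i \<in> torus_carrier"
    and r_pos: "0 < r" and r_small: "r < 1/8"
    and disj: "\<And>i j. i < M \<Longrightarrow> j < M \<Longrightarrow> i \<noteq> j \<Longrightarrow>
                 torus_cball (p i) (2*r) \<inter> torus_cball (p j) (2*r) = {}"
    and cover: "torus_top closure_of (torus_carrier - S) \<subseteq> (\<Union>i<M. torus_cball (p i) r)"
    and k: "1 \<le> k" "k \<le> int CARD('n) - 1"
  shows "hom_induced k (subtopology torus_top S) {} torus_top {} id
           ` carrier (homology_group k (subtopology torus_top S))
         = carrier (homology_group k torus_top)"
proof -
  define \<rho> where "\<rho> = 3 * r / 2"
  define R where "R = 2 * r"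
  have rho: "0 < \<rho>" "\<rho> < R" "R < 1/4" "r < \<rho>" using r_pos r_small by (auto simp: \<rho>_def R_def)
  define A where "A j = torus_carrier - (\<Union>i<j. tmb (p i) \<rho>)" for j
  let ?T = "torus_top :: (real^'n) topology"
  have contT: "continuous_map (subtopology ?T B) ?T id" for B
    by (simp add: continuous_map_from_subtopology)
  have P: "hom_induced k (subtopology ?T (A j)) {} ?T {} id ` carrier (homology_group k (subtopology ?T (A j)))
           = carrier (homology_group k ?T)" if "j \<le> M" for j
    using that
  proof (induction j)
    case 0
    have "A 0 = topspace ?T" by (simp add: A_def torus_top_topspace)
    then have e0: "subtopology ?T (A 0) = ?T" by simp
    have e: "\<forall>c \<in> carrier (homology_group k ?T). hom_induced k ?T {} ?T {} id c = c"
      using hom_induced_id by blast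
    have "hom_induced k ?T {} ?T {} id ` carrier (homology_group k ?T) = carrier (homology_group k ?T)"
    proof
      show "hom_induced k ?T {} ?T {} id ` carrier (homology_group k ?T) \<subseteq> carrier (homology_group k ?T)"
        by (intro hom_carrier hom_induced_hom)
      show "carrier (homology_group k ?T) \<subseteq> hom_induced k ?T {} ?T {} id ` carrier (homology_group k ?T)"
      proof
        fix c assume c: "c \<in> carrier (homology_group k ?T)"
        then have "hom_induced k ?T {} ?T {} id c = c" by (rule hom_induced_id)
        then show "c \<in> hom_induced k ?T {} ?T {} id ` carrier (homology_group k ?T)"
          using c by (metis rev_image_eqI)
      qed
    qed
    then show ?case unfolding e0 .
  next
    case (Suc j)
    have jM: "j < M" using Suc by simp
    have AS: "A (Suc j) = A j - tmb (p j) \<rho>" by (auto simp: A_def lessThan_Suc)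
    have cb: "torus_cball (p j) R \<subseteq> A j"
    proof
      fix x assume x: "x \<in> torus_cball (p j) R"
      have "x \<notin> tmb (p i) \<rho>" if "i < j" for i
      proof
        assume "x \<in> tmb (p i) \<rho>"
        then have "x \<in> torus_cball (p i) (2*r)" using tmb_sub_tcb[of \<rho> "2*r" "p i"] rho by (auto simp: R_def)
        moreover have "x \<in> torus_cball (p j) (2*r)" using x by (simp add: R_def)
        ultimately show False using disj[of i j] that jM by auto
      qed
      then show "x \<in> A j" using x tcb_carrier by (auto simp: A_def)
    qed
    have Asub: "A j \<subseteq> torus_carrier" by (auto simp: A_def)
    have st: "hom_induced k (subtopology ?T (A (Suc j))) {} (subtopology ?T (A j)) {} id
           ` carrier (homology_group k (subtopology ?T (A (Suc j))))
       = carrier (homology_group k (subtopology ?T (A j)))"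
      unfolding AS by (rule step_surj[OF p_in[OF jM] rho(1-3) k(2) Asub cb])
    have comp: "hom_induced k (subtopology ?T (A (Suc j))) {} ?T {} (id \<circ> id)
        = hom_induced k (subtopology ?T (A j)) {} ?T {} id \<circ> hom_induced k (subtopology ?T (A (Suc j))) {} (subtopology ?T (A j)) {} id"
      by (rule hom_induced_compose_empty[OF cont_incl contT]) (auto simp: AS)
    have comp': "hom_induced k (subtopology ?T (A (Suc j))) {} ?T {} id
        = hom_induced k (subtopology ?T (A j)) {} ?T {} id \<circ> hom_induced k (subtopology ?T (A (Suc j))) {} (subtopology ?T (A j)) {} id"
      using comp by simp
    show ?case
      unfolding comp' image_comp[symmetric] st by (rule Suc.IH[OF less_imp_le[OF jM]])
  qed
  have AM: "A M \<subseteq> S"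
  proof
    fix x assume x: "x \<in> A M"
    show "x \<in> S"
    proof (rule ccontr)
      assume "x \<notin> S"
      then have "x \<in> torus_carrier - S" using x by (auto simp: A_def)
      then have "x \<in> ?T closure_of (torus_carrier - S)"
        by (metis closure_of_subset Diff_subset torus_top_topspace subsetD)
      then obtain i where i: "i < M" "x \<in> torus_cball (p i) r" using cover by auto
      then have "x \<in> tmb (p i) \<rho>" using tcb_sub_tmb[of r \<rho> "p i"] rho by auto
      then show False using x i by (auto simp: A_def)
    qed
  qed
  have Ssub: "S \<subseteq> topspace ?T" using S_closed closedin_subset by blast
  have comp: "hom_induced k (subtopology ?T (A M)) {} ?T {} (id \<circ> id)
        = hom_induced k (subtopology ?T S) {} ?T {} id \<circ> hom_induced k (subtopology ?T (A M)) {} (subtopology ?T S) {} id"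
    by (rule hom_induced_compose_empty[OF cont_incl[OF AM] contT])
  have "carrier (homology_group k ?T) \<subseteq> hom_induced k (subtopology ?T S) {} ?T {} id ` carrier (homology_group k (subtopology ?T S))"
  proof -
    have "carrier (homology_group k ?T) = hom_induced k (subtopology ?T S) {} ?T {} id `
            (hom_induced k (subtopology ?T (A M)) {} (subtopology ?T S) {} id ` carrier (homology_group k (subtopology ?T (A M))))"
      using P[OF order_refl] comp by (simp add: image_comp)
    also have "\<dots> \<subseteq> hom_induced k (subtopology ?T S) {} ?T {} id ` carrier (homology_group k (subtopology ?T S))"
      by (intro image_mono hom_carrier hom_induced_hom)
    finally show ?thesis .
  qed
  moreover have "hom_induced k (subtopology ?T S) {} ?T {} id ` carrier (homology_group k (subtopology ?T S)) \<subseteq> carrier (homology_group k ?T)"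
    by (intro hom_carrier hom_induced_hom)
  ultimately show ?thesis by blast
qed

end
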